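(* Let $M$ be a model of the theory PrA of probability algebras. A nonempty closed set $D\subseteq M$ is definable with parameters from $M$ if and only if $D=[a,b]=\{x\in M: a\le x\le b\}$ for some $a,b\in M$ with $a\le b$.
   Context: PrA is the affine theory in the language $\{\wedge,\vee,{}',0,1,\mu\}$ (with metric $d$) axiomatized by: the axioms of Boolean algebras; $\mu(0)=0$, $\mu(1)=1$; $\mu(x)\le\mu(x\vee y)$; $\mu(x\wedge y)+\mu(x\vee y)=\mu(x)+\mu(y)$; $d(x,y)=\mu(x\triangle y)$. Models are complete metric spaces, so they are measure algebras of probability spaces (Dedekind complete Boolean algebras with a $\sigma$-additive strictly positive probability $\mu$), and $\le$ is the Boolean order. Affine formulas are built from $1$ and atomic formulas using only $r\cdot\phi$ ($r\in\mathbb R$), $\phi+\psi$, $\inf_x$, $\sup_x$. A predicate $P:M\to\mathbb R$ is definable with parameters if it is a uniform limit on $M$ of interpretations of affine formulas with parameters from $M$. A closed $D\subseteq M$ is definable with parameters if $x\mapsto d(x,D)=\inf_{a\in D}d(x,a)$ is definable with parameters. *)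

theory Defs
  imports "HOL-Analysis.Analysis"
begin

text \<open>A model of PrA is represented by a type of class boolean_algebra (the Boolean
algebra axioms, with 0 = bot, 1 = top, meet, join, complement) together with
a function mu satisfying the PrA axioms, such that the induced d is a metric
and the resulting metric space is complete.\<close>

definition sdiff :: "'a::boolean_algebra \<Rightarrow> 'a \<Rightarrow> 'a" where
  "sdiff x y = sup (inf x (- y)) (inf (- x) y)"

definition pra_dist :: "('a::boolean_algebra \<Rightarrow> real) \<Rightarrow> 'a \<Rightarrow> 'a \<Rightarrow> real" where
  "pra_dist \<mu> x y = \<mu> (sdiff x y)"

definition prA_model :: "('a::boolean_algebra \<Rightarrow> real) \<Rightarrow> bool" where
  "prA_model \<mu> \<longleftrightarrow>
     \<mu> bot = 0 \<and> \<mu> top = 1 \<and>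
     (\<forall>x y. \<mu> x \<le> \<mu> (sup x y)) \<and>
     (\<forall>x y. \<mu> (inf x y) + \<mu> (sup x y) = \<mu> x + \<mu> y) \<and>
     \<comment> \<open>d is a metric (not merely a pseudometric)\<close>
     (\<forall>x y. pra_dist \<mu> x y = 0 \<longrightarrow> x = y) \<and>
     \<comment> \<open>completeness of the metric d\<close>
     (\<forall>s :: nat \<Rightarrow> 'a.
        (\<forall>e>0. \<exists>N. \<forall>m\<ge>N. \<forall>n\<ge>N. pra_dist \<mu> (s m) (s n) < e) \<longrightarrow>
        (\<exists>l. (\<lambda>n. pra_dist \<mu> (s n) l) \<longlonglongrightarrow> 0))"

datatype 'a trm =
    TVar nat | TPar 'a | TMeet "'a trm" "'a trm" | TJoin "'a trm" "'a trm"
  | TCompl "'a trm" | TZero | TOne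

datatype 'a afml =
    AOne
  | AMu "'a trm"
  | ADist "'a trm" "'a trm"
  | AScale real "'a afml"
  | APlus "'a afml" "'a afml"
  | AInf nat "'a afml"
  | ASup nat "'a afml"

primrec tfv :: "'a trm \<Rightarrow> nat set" where
  "tfv (TVar n) = {n}"
| "tfv (TPar a) = {}"
| "tfv (TMeet s t) = tfv s \<union> tfv t"
| "tfv (TJoin s t) = tfv s \<union> tfv t"
| "tfv (TCompl t) = tfv t"
| "tfv TZero = {}"
| "tfv TOne = {}"

primrec ffv :: "'a afml \<Rightarrow> nat set" where
  "ffv AOne = {}"
| "ffv (AMu t) = tfv t"
| "ffv (ADist s t) = tfv s \<union> tfv t"
| "ffv (AScale r \<phi>) = ffv \<phi>"
| "ffv (APlus \<phi> \<psi>) = ffv \<phi> \<union> ffv \<psi>"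
| "ffv (AInf x \<phi>) = ffv \<phi> - {x}"
| "ffv (ASup x \<phi>) = ffv \<phi> - {x}"

primrec teval :: "(nat \<Rightarrow> 'a::boolean_algebra) \<Rightarrow> 'a trm \<Rightarrow> 'a" where
  "teval \<rho> (TVar n) = \<rho> n"
| "teval \<rho> (TPar a) = a"
| "teval \<rho> (TMeet s t) = inf (teval \<rho> s) (teval \<rho> t)"
| "teval \<rho> (TJoin s t) = sup (teval \<rho> s) (teval \<rho> t)"
| "teval \<rho> (TCompl t) = - teval \<rho> t"
| "teval \<rho> TZero = bot"
| "teval \<rho> TOne = top"

primrec feval :: "('a::boolean_algebra \<Rightarrow> real) \<Rightarrow> (nat \<Rightarrow> 'a) \<Rightarrow> 'a afml \<Rightarrow> real" where
  "feval \<mu> \<rho> AOne = 1"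
| "feval \<mu> \<rho> (AMu t) = \<mu> (teval \<rho> t)"
| "feval \<mu> \<rho> (ADist s t) = pra_dist \<mu> (teval \<rho> s) (teval \<rho> t)"
| "feval \<mu> \<rho> (AScale r \<phi>) = r * feval \<mu> \<rho> \<phi>"
| "feval \<mu> \<rho> (APlus \<phi> \<psi>) = feval \<mu> \<rho> \<phi> + feval \<mu> \<rho> \<psi>"
| "feval \<mu> \<rho> (AInf x \<phi>) = (INF a. feval \<mu> (\<rho>(x := a)) \<phi>)"
| "feval \<mu> \<rho> (ASup x \<phi>) = (SUP a. feval \<mu> (\<rho>(x := a)) \<phi>)"

text \<open>A predicate P on M is definable with parameters if it is a uniform limit on M
of interpretations of affine formulas phi(x) (free variables among {x}, x = variable 0)
with parameters from M. The valuation of variables other than 0 is irrelevant.\<close>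

definition definable_pred :: "('a::boolean_algebra \<Rightarrow> real) \<Rightarrow> ('a \<Rightarrow> real) \<Rightarrow> bool" where
  "definable_pred \<mu> P \<longleftrightarrow>
     (\<exists>\<phi>s :: nat \<Rightarrow> 'a afml.
        (\<forall>n. ffv (\<phi>s n) \<subseteq> {0}) \<and>
        uniform_limit UNIV (\<lambda>n a. feval \<mu> (\<lambda>_. a) (\<phi>s n)) P sequentially)"

definition dist_to_set :: "('a::boolean_algebra \<Rightarrow> real) \<Rightarrow> 'a set \<Rightarrow> 'a \<Rightarrow> real" where
  "dist_to_set \<mu> D x = (INF a\<in>D. pra_dist \<mu> x a)"

definition closed_set :: "('a::boolean_algebra \<Rightarrow> real) \<Rightarrow> 'a set \<Rightarrow> bool" where
  "closed_set \<mu> D \<longleftrightarrow> (\<forall>x. (\<forall>e>0. \<exists>a\<in>D. pra_dist \<mu> x a < e) \<longrightarrow> x \<in> D)"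

definition definable_set :: "('a::boolean_algebra \<Rightarrow> real) \<Rightarrow> 'a set \<Rightarrow> bool" where
  "definable_set \<mu> D \<longleftrightarrow> definable_pred \<mu> (dist_to_set \<mu> D)"

end

theory Submission
  imports Defs
begin

definition mixe :: "'a::boolean_algebra \<Rightarrow> 'a \<Rightarrow> 'a \<Rightarrow> 'a" where
  "mixe c p q = sup (inf p c) (inf q (- c))"

lemma split_c: "(x::'a::boolean_algebra) = sup (inf x c) (inf x (-c))"
  by (metis boolean_algebra.conj_disj_distrib boolean_algebra.disj_cancel_right inf_top_right)

lemma ba_eqI: "inf (x::'a::boolean_algebra) c = inf y c \<Longrightarrow> inf x (-c) = inf y (-c) \<Longrightarrow> x = y"
  by (metis split_c)

lemma mixe_c1: "inf (mixe c p q) c = inf p c"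
  unfolding mixe_def by (simp add: inf_sup_distrib2 inf_assoc)
lemma mixe_c2: "inf (mixe c p q) (-c) = inf q (-c)"
  unfolding mixe_def by (simp add: inf_sup_distrib2 inf_assoc)
lemma compl_c: "inf (-x) (c::'a::boolean_algebra) = inf (-(inf x c)) c"
  by (simp add: inf_sup_distrib2)
lemma inf_c: "inf (inf a b) (c::'a::boolean_algebra) = inf (inf a c) (inf b c)"
  by (simp add: inf_aci)
lemma mixe_compl: "- mixe c p q = mixe c (- p) (- q)"
  apply (rule ba_eqI[where c=c])
   apply (subst compl_c, simp only: mixe_c1 mixe_c2, subst compl_c[symmetric], rule refl)
  apply (subst compl_c, simp only: mixe_c1 mixe_c2, subst compl_c[symmetric], rule refl)
  done
lemma mixe_inf: "inf (mixe c p q) (mixe c p' q') = mixe c (inf p p') (inf q q')"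
  apply (rule ba_eqI[where c=c])
   apply (subst inf_c, simp only: mixe_c1 mixe_c2, subst inf_c[symmetric], rule refl)
  apply (subst inf_c, simp only: mixe_c1 mixe_c2, subst inf_c[symmetric], rule refl)
  done
lemma mixe_sup: "sup (mixe c p q) (mixe c p' q') = mixe c (sup p p') (sup q q')"
proof -
  have "sup (mixe c p q) (mixe c p' q') = - inf (- mixe c p q) (- mixe c p' q')" by simp
  also have "\<dots> = - mixe c (inf (-p) (-p')) (inf (-q) (-q'))" by (simp only: mixe_compl mixe_inf)
  also have "\<dots> = mixe c (sup p p') (sup q q')" by (simp only: mixe_compl) simp
  finally show ?thesis .
qed
lemma mixe_same: "mixe c p p = p"
  unfolding mixe_def by (rule split_c[symmetric])
lemma mixe_mixe1: "mixe c (mixe c p q) (mixe c q p) = p"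
  by (rule ba_eqI[where c=c]) (simp_all only: mixe_c1 mixe_c2)

lemma sdiff_mixe: "sdiff (mixe c p q) (mixe c p' q') = mixe c (sdiff p p') (sdiff q q')"
  unfolding sdiff_def by (simp only: mixe_compl mixe_inf mixe_sup)

lemma sdiff_sym: "sdiff x y = sdiff y x"
  unfolding sdiff_def by (simp add: sup_commute inf_commute)
lemma sdiff_self: "sdiff x x = bot"
  unfolding sdiff_def by simp
lemma sdiff_compl: "sdiff (-x) (-y) = sdiff x y"
  unfolding sdiff_def by (simp add: sup_commute inf_commute)

context
  fixes \<mu> :: "'a::boolean_algebra \<Rightarrow> real"
  assumes M: "prA_model \<mu>"
begin

lemma mu_bot: "\<mu> bot = 0" and mu_top: "\<mu> top = 1"
  and mu_sup: "\<mu> x \<le> \<mu> (sup x y)"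
  and mu_mod: "\<mu> (inf x y) + \<mu> (sup x y) = \<mu> x + \<mu> y"
  and mu_sep: "pra_dist \<mu> x y = 0 \<Longrightarrow> x = y"
  using M unfolding prA_model_def by auto

lemma mu_mono: "x \<le> y \<Longrightarrow> \<mu> x \<le> \<mu> y"
  using mu_sup[of x y] by (simp add: sup_absorb2)

lemma mu_nonneg: "0 \<le> \<mu> x"
  using mu_mono[of bot x] mu_bot by simp

lemma mu_le1: "\<mu> x \<le> 1"
  using mu_mono[of x top] mu_top by simp

lemma mu_disj: "inf x y = bot \<Longrightarrow> \<mu> (sup x y) = \<mu> x + \<mu> y"
  using mu_mod[of x y] mu_bot by simp

lemma mu_split: "\<mu> x = \<mu> (inf x c) + \<mu> (inf x (-c))"
proof -
  have "inf (inf x c) (inf x (-c)) = bot"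
    using inf_mono[OF inf_le2 inf_le2, of x c x "-c"] by (simp add: le_bot)
  then have "\<mu> (sup (inf x c) (inf x (-c))) = \<mu> (inf x c) + \<mu> (inf x (-c))"
    by (rule mu_disj)
  then show ?thesis using split_c[of x c] by simp
qed

lemma mu_mixe: "\<mu> (mixe c p q) + \<mu> (mixe c q p) = \<mu> p + \<mu> q"
  using mu_split[of "mixe c p q" c] mu_split[of "mixe c q p" c] mu_split[of p c] mu_split[of q c]
  by (simp add: mixe_c1 mixe_c2)

lemma dist_nonneg: "0 \<le> pra_dist \<mu> x y"
  unfolding pra_dist_def by (rule mu_nonneg)

lemma dist_sym: "pra_dist \<mu> x y = pra_dist \<mu> y x"
  unfolding pra_dist_def by (simp add: sdiff_sym)

lemma mu_le_dist: "\<mu> x \<le> \<mu> y + pra_dist \<mu> x y"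
proof -
  have "\<mu> (inf x y) \<le> \<mu> y" by (rule mu_mono) simp
  moreover have "\<mu> (inf x (-y)) \<le> pra_dist \<mu> x y"
    unfolding pra_dist_def sdiff_def by (rule mu_mono) simp
  ultimately show ?thesis using mu_split[of x y] by simp
qed

lemma dist_le: "y \<le> x \<Longrightarrow> pra_dist \<mu> x y = \<mu> x - \<mu> y"
proof -
  assume yx: "y \<le> x"
  have "inf (-x) y = bot" using inf_mono[OF order_refl yx, of "-x"] by (simp add: le_bot inf_commute)
  then have "sdiff x y = inf x (-y)" unfolding sdiff_def by simp
  moreover have "inf x y = y" using yx by (simp add: inf_absorb2)
  ultimately show ?thesis using mu_split[of x y] unfolding pra_dist_def by simp
qed

end

definition mixv :: "'a::boolean_algebra \<Rightarrow> (nat \<Rightarrow> 'a) \<Rightarrow> (nat \<Rightarrow> 'a) \<Rightarrow> nat \<Rightarrow> 'a" where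
  "mixv c \<rho> \<sigma> = (\<lambda>i. mixe c (\<rho> i) (\<sigma> i))"

lemma mixv_mixv: "mixv c (mixv c \<rho> \<sigma>) (mixv c \<sigma> \<rho>) = \<rho>"
  unfolding mixv_def by (simp add: mixe_mixe1)

lemma mixv_upd: "(mixv c \<rho> \<sigma>)(x := mixe c a b) = mixv c (\<rho>(x:=a)) (\<sigma>(x:=b))"
  unfolding mixv_def by auto

lemma teval_mixv: "teval (mixv c \<rho> \<sigma>) t = mixe c (teval \<rho> t) (teval \<sigma> t)"
  by (induction t) (simp_all add: mixv_def mixe_same mixe_inf mixe_sup mixe_compl)

definition mix_inv :: "((nat \<Rightarrow> 'a::boolean_algebra) \<Rightarrow> real) \<Rightarrow> bool" where
  "mix_inv F \<longleftrightarrow> (\<forall>c \<rho> \<sigma>. F \<rho> + F \<sigma> = F (mixv c \<rho> \<sigma>) + F (mixv c \<sigma> \<rho>)) \<and> (\<exists>B. \<forall>\<rho>. \<bar>F \<rho>\<bar> \<le> B)"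

lemma inv_INF:
  assumes "mix_inv F"
  shows "mix_inv (\<lambda>\<rho>. INF a. F (\<rho>(x:=a)))"
proof -
  define G where "G = (\<lambda>\<rho>. INF a. F (\<rho>(x:=a)))"
  have Gd: "\<And>\<rho>. G \<rho> = (INF a. F (\<rho>(x:=a)))" by (simp add: G_def)
  obtain B where B: "\<And>\<rho>. \<bar>F \<rho>\<bar> \<le> B" using assms unfolding mix_inv_def by auto
  have E: "\<And>c \<rho> \<sigma>. F \<rho> + F \<sigma> = F (mixv c \<rho> \<sigma>) + F (mixv c \<sigma> \<rho>)"
    using assms unfolding mix_inv_def by auto
  have bdd: "bdd_below (range (\<lambda>a. F (\<rho>(x:=a))))" for \<rho>
  proof (rule bdd_belowI[where m="-B"])
    fix y assume "y \<in> range (\<lambda>a. F (\<rho>(x:=a)))"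
    then obtain a where "y = F (\<rho>(x:=a))" by auto
    then show "-B \<le> y" using B[of "\<rho>(x:=a)"] by linarith
  qed
  have low: "G \<rho> \<le> F (\<rho>(x:=a))" for \<rho> a
    unfolding Gd by (rule cINF_lower[OF bdd]) simp
  have grt: "m \<le> G \<rho>" if "\<And>a. m \<le> F (\<rho>(x:=a))" for m \<rho>
    unfolding Gd by (rule cINF_greatest) (simp_all add: that)
  have key: "G (mixv c \<rho> \<sigma>) + G (mixv c \<sigma> \<rho>) \<le> G \<rho> + G \<sigma>" for c \<rho> \<sigma>
  proof -
    have 1: "G (mixv c \<rho> \<sigma>) + G (mixv c \<sigma> \<rho>) \<le> F (\<rho>(x:=a)) + F (\<sigma>(x:=b))" for a b
    proof -
      have "G (mixv c \<rho> \<sigma>) \<le> F (mixv c (\<rho>(x:=a)) (\<sigma>(x:=b)))"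
        using low[of "mixv c \<rho> \<sigma>" "mixe c a b"] by (simp only: mixv_upd)
      moreover have "G (mixv c \<sigma> \<rho>) \<le> F (mixv c (\<sigma>(x:=b)) (\<rho>(x:=a)))"
        using low[of "mixv c \<sigma> \<rho>" "mixe c b a"] by (simp only: mixv_upd)
      ultimately show ?thesis using E[of "\<rho>(x:=a)" "\<sigma>(x:=b)" c] by linarith
    qed
    have 2: "G (mixv c \<rho> \<sigma>) + G (mixv c \<sigma> \<rho>) - F (\<sigma>(x:=b)) \<le> G \<rho>" for b
      proof (rule grt) fix a show "G (mixv c \<rho> \<sigma>) + G (mixv c \<sigma> \<rho>) - F (\<sigma>(x:=b)) \<le> F (\<rho>(x:=a))" using 1[of a b] by linarith qed
    have "G (mixv c \<rho> \<sigma>) + G (mixv c \<sigma> \<rho>) - G \<rho> \<le> G \<sigma>"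
      proof (rule grt) fix b show "G (mixv c \<rho> \<sigma>) + G (mixv c \<sigma> \<rho>) - G \<rho> \<le> F (\<sigma>(x:=b))" using 2[of b] by linarith qed
    then show ?thesis by linarith
  qed
  have eq: "G \<rho> + G \<sigma> = G (mixv c \<rho> \<sigma>) + G (mixv c \<sigma> \<rho>)" for c \<rho> \<sigma>
  proof -
    have "G (mixv c (mixv c \<rho> \<sigma>) (mixv c \<sigma> \<rho>)) + G (mixv c (mixv c \<sigma> \<rho>) (mixv c \<rho> \<sigma>))
        \<le> G (mixv c \<rho> \<sigma>) + G (mixv c \<sigma> \<rho>)" by (rule key)
    then have "G \<rho> + G \<sigma> \<le> G (mixv c \<rho> \<sigma>) + G (mixv c \<sigma> \<rho>)" by (simp only: mixv_mixv)
    then show ?thesis using key[of c \<rho> \<sigma>] by linarith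
  qed
  have bd: "\<bar>G \<rho>\<bar> \<le> B" for \<rho>
  proof -
    have "-B \<le> G \<rho>" proof (rule grt) fix a show "-B \<le> F (\<rho>(x:=a))" using B[of "\<rho>(x:=a)"] by linarith qed
    moreover have "G \<rho> \<le> B" using low[of \<rho> undefined] B[of "\<rho>(x:=undefined)"] by linarith
    ultimately show ?thesis by linarith
  qed
  have "mix_inv G" unfolding mix_inv_def using eq bd by blast
  then show ?thesis by (simp add: G_def)
qed

lemma inv_SUP:
  assumes "mix_inv F"
  shows "mix_inv (\<lambda>\<rho>. SUP a. F (\<rho>(x:=a)))"
proof -
  define G where "G = (\<lambda>\<rho>. SUP a. F (\<rho>(x:=a)))"
  have Gd: "\<And>\<rho>. G \<rho> = (SUP a. F (\<rho>(x:=a)))" by (simp add: G_def)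
  obtain B where B: "\<And>\<rho>. \<bar>F \<rho>\<bar> \<le> B" using assms unfolding mix_inv_def by auto
  have E: "\<And>c \<rho> \<sigma>. F \<rho> + F \<sigma> = F (mixv c \<rho> \<sigma>) + F (mixv c \<sigma> \<rho>)"
    using assms unfolding mix_inv_def by auto
  have bdd: "bdd_above (range (\<lambda>a. F (\<rho>(x:=a))))" for \<rho>
  proof (rule bdd_aboveI[where M="B"])
    fix y assume "y \<in> range (\<lambda>a. F (\<rho>(x:=a)))"
    then obtain a where "y = F (\<rho>(x:=a))" by auto
    then show "y \<le> B" using B[of "\<rho>(x:=a)"] by linarith
  qed
  have up: "F (\<rho>(x:=a)) \<le> G \<rho>" for \<rho> a
    unfolding Gd by (rule cSUP_upper[OF _ bdd]) simp
  have lst: "G \<rho> \<le> m" if "\<And>a. F (\<rho>(x:=a)) \<le> m" for m \<rho>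
    unfolding Gd by (rule cSUP_least) (simp_all add: that)
  have key: "G \<rho> + G \<sigma> \<le> G (mixv c \<rho> \<sigma>) + G (mixv c \<sigma> \<rho>)" for c \<rho> \<sigma>
  proof -
    have 1: "F (\<rho>(x:=a)) + F (\<sigma>(x:=b)) \<le> G (mixv c \<rho> \<sigma>) + G (mixv c \<sigma> \<rho>)" for a b
    proof -
      have "F (mixv c (\<rho>(x:=a)) (\<sigma>(x:=b))) \<le> G (mixv c \<rho> \<sigma>)"
        using up[of "mixv c \<rho> \<sigma>" "mixe c a b"] by (simp only: mixv_upd)
      moreover have "F (mixv c (\<sigma>(x:=b)) (\<rho>(x:=a))) \<le> G (mixv c \<sigma> \<rho>)"
        using up[of "mixv c \<sigma> \<rho>" "mixe c b a"] by (simp only: mixv_upd)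
      ultimately show ?thesis using E[of "\<rho>(x:=a)" "\<sigma>(x:=b)" c] by linarith
    qed
    have 2: "G \<rho> \<le> G (mixv c \<rho> \<sigma>) + G (mixv c \<sigma> \<rho>) - F (\<sigma>(x:=b))" for b
      proof (rule lst) fix a show "F (\<rho>(x:=a)) \<le> G (mixv c \<rho> \<sigma>) + G (mixv c \<sigma> \<rho>) - F (\<sigma>(x:=b))" using 1[of a b] by linarith qed
    have "G \<sigma> \<le> G (mixv c \<rho> \<sigma>) + G (mixv c \<sigma> \<rho>) - G \<rho>"
      proof (rule lst) fix b show "F (\<sigma>(x:=b)) \<le> G (mixv c \<rho> \<sigma>) + G (mixv c \<sigma> \<rho>) - G \<rho>" using 2[of b] by linarith qed
    then show ?thesis by linarith
  qed
  have eq: "G \<rho> + G \<sigma> = G (mixv c \<rho> \<sigma>) + G (mixv c \<sigma> \<rho>)" for c \<rho> \<sigma>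
  proof -
    have "G (mixv c \<rho> \<sigma>) + G (mixv c \<sigma> \<rho>) \<le>
        G (mixv c (mixv c \<rho> \<sigma>) (mixv c \<sigma> \<rho>)) + G (mixv c (mixv c \<sigma> \<rho>) (mixv c \<rho> \<sigma>))"
      by (rule key)
    then have "G (mixv c \<rho> \<sigma>) + G (mixv c \<sigma> \<rho>) \<le> G \<rho> + G \<sigma>" by (simp only: mixv_mixv)
    then show ?thesis using key[of \<rho> \<sigma> c] by linarith
  qed
  have bd: "\<bar>G \<rho>\<bar> \<le> B" for \<rho>
  proof -
    have "G \<rho> \<le> B" proof (rule lst) fix a show "F (\<rho>(x:=a)) \<le> B" using B[of "\<rho>(x:=a)"] by linarith qed
    moreover have "-B \<le> G \<rho>" using up[of \<rho> undefined] B[of "\<rho>(x:=undefined)"] by linarith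
    ultimately show ?thesis by linarith
  qed
  have "mix_inv G" unfolding mix_inv_def using eq bd by blast
  then show ?thesis by (simp add: G_def)
qed

lemma inv_feval:
  assumes M: "prA_model \<mu>"
  shows "mix_inv (\<lambda>\<rho>. feval \<mu> \<rho> \<phi>)"
proof (induction \<phi>)
  case AOne
  then show ?case unfolding mix_inv_def by auto
next
  case (AMu t)
  show ?case unfolding mix_inv_def
  proof (intro conjI allI)
    fix c \<rho> \<sigma>
    show "feval \<mu> \<rho> (AMu t) + feval \<mu> \<sigma> (AMu t) =
      feval \<mu> (mixv c \<rho> \<sigma>) (AMu t) + feval \<mu> (mixv c \<sigma> \<rho>) (AMu t)"
      using mu_mixe[OF M, of c "teval \<rho> t" "teval \<sigma> t"] by (simp add: teval_mixv)
    have "\<forall>\<rho>. \<bar>feval \<mu> \<rho> (AMu t)\<bar> \<le> 1"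
      using mu_nonneg[OF M] mu_le1[OF M] by (simp add: abs_le_iff)
    then show "\<exists>B. \<forall>\<rho>. \<bar>feval \<mu> \<rho> (AMu t)\<bar> \<le> B" by blast
  qed
next
  case (ADist s t)
  show ?case unfolding mix_inv_def
  proof (intro conjI allI)
    fix c \<rho> \<sigma>
    show "feval \<mu> \<rho> (ADist s t) + feval \<mu> \<sigma> (ADist s t) =
      feval \<mu> (mixv c \<rho> \<sigma>) (ADist s t) + feval \<mu> (mixv c \<sigma> \<rho>) (ADist s t)"
      using mu_mixe[OF M, of c "sdiff (teval \<rho> s) (teval \<rho> t)" "sdiff (teval \<sigma> s) (teval \<sigma> t)"]
      by (simp add: teval_mixv pra_dist_def sdiff_mixe)
    have "\<forall>\<rho>. \<bar>feval \<mu> \<rho> (ADist s t)\<bar> \<le> 1"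
      using mu_nonneg[OF M] mu_le1[OF M] by (simp add: abs_le_iff pra_dist_def)
    then show "\<exists>B. \<forall>\<rho>. \<bar>feval \<mu> \<rho> (ADist s t)\<bar> \<le> B" by blast
  qed
next
  case (AScale r \<phi>)
  then obtain B where B: "\<And>\<rho>. \<bar>feval \<mu> \<rho> \<phi>\<bar> \<le> B" unfolding mix_inv_def by auto
  have E: "\<And>c \<rho> \<sigma>. feval \<mu> \<rho> \<phi> + feval \<mu> \<sigma> \<phi> = feval \<mu> (mixv c \<rho> \<sigma>) \<phi> + feval \<mu> (mixv c \<sigma> \<rho>) \<phi>"
    using AScale unfolding mix_inv_def by auto
  show ?case unfolding mix_inv_def
  proof (intro conjI allI)
    fix c \<rho> \<sigma>
    show "feval \<mu> \<rho> (AScale r \<phi>) + feval \<mu> \<sigma> (AScale r \<phi>) =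
      feval \<mu> (mixv c \<rho> \<sigma>) (AScale r \<phi>) + feval \<mu> (mixv c \<sigma> \<rho>) (AScale r \<phi>)"
      using E[of \<rho> \<sigma> c] by (simp only: feval.simps distrib_left[symmetric])
    have "\<bar>feval \<mu> \<rho> (AScale r \<phi>)\<bar> \<le> \<bar>r\<bar> * B" for \<rho>
      using mult_left_mono[OF B[of \<rho>] abs_ge_zero[of r]] by (simp add: abs_mult)
    then show "\<exists>B. \<forall>\<rho>. \<bar>feval \<mu> \<rho> (AScale r \<phi>)\<bar> \<le> B" by blast
  qed
next
  case (APlus \<phi> \<psi>)
  then obtain B1 B2 where B1: "\<And>\<rho>. \<bar>feval \<mu> \<rho> \<phi>\<bar> \<le> B1" and B2: "\<And>\<rho>. \<bar>feval \<mu> \<rho> \<psi>\<bar> \<le> B2"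
    unfolding mix_inv_def by metis
  have E1: "\<And>c \<rho> \<sigma>. feval \<mu> \<rho> \<phi> + feval \<mu> \<sigma> \<phi> = feval \<mu> (mixv c \<rho> \<sigma>) \<phi> + feval \<mu> (mixv c \<sigma> \<rho>) \<phi>"
    using APlus unfolding mix_inv_def by auto
  have E2: "\<And>c \<rho> \<sigma>. feval \<mu> \<rho> \<psi> + feval \<mu> \<sigma> \<psi> = feval \<mu> (mixv c \<rho> \<sigma>) \<psi> + feval \<mu> (mixv c \<sigma> \<rho>) \<psi>"
    using APlus unfolding mix_inv_def by auto
  show ?case unfolding mix_inv_def
  proof (intro conjI allI)
    fix c \<rho> \<sigma>
    show "feval \<mu> \<rho> (APlus \<phi> \<psi>) + feval \<mu> \<sigma> (APlus \<phi> \<psi>) =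
      feval \<mu> (mixv c \<rho> \<sigma>) (APlus \<phi> \<psi>) + feval \<mu> (mixv c \<sigma> \<rho>) (APlus \<phi> \<psi>)"
      using E1[of \<rho> \<sigma> c] E2[of \<rho> \<sigma> c] by simp
    have "\<bar>feval \<mu> \<rho> (APlus \<phi> \<psi>)\<bar> \<le> B1 + B2" for \<rho>
      using B1[of \<rho>] B2[of \<rho>] by (simp add: abs_le_iff)
    then show "\<exists>B. \<forall>\<rho>. \<bar>feval \<mu> \<rho> (APlus \<phi> \<psi>)\<bar> \<le> B" by blast
  qed
next
  case (AInf x \<phi>)
  then show ?case using inv_INF[of "\<lambda>\<rho>. feval \<mu> \<rho> \<phi>" x] by simp
next
  case (ASup x \<phi>)
  then show ?case using inv_SUP[of "\<lambda>\<rho>. feval \<mu> \<rho> \<phi>" x] by simp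
qed



lemma def_mix:
  assumes M: "prA_model \<mu>" and D: "definable_pred \<mu> P"
  shows "P x + P y = P (mixe c x y) + P (mixe c y x)"
proof -
  obtain \<phi>s where U: "uniform_limit UNIV (\<lambda>n a. feval \<mu> (\<lambda>_. a) (\<phi>s n)) P sequentially"
    using D unfolding definable_pred_def by blast
  define f where "f = (\<lambda>n a. feval \<mu> (\<lambda>_. a) (\<phi>s n))"
  have T: "(\<lambda>n. f n z) \<longlonglongrightarrow> P z" for z
    using tendsto_uniform_limitI[OF U, of z] unfolding f_def by simp
  have mv: "mixv c (\<lambda>_. u) (\<lambda>_. v) = (\<lambda>_. mixe c u v)" for u v
    unfolding mixv_def by simp
  have eqn: "f n x + f n y = f n (mixe c x y) + f n (mixe c y x)" for n
  proof -
    have "\<forall>c \<rho> \<sigma>. feval \<mu> \<rho> (\<phi>s n) + feval \<mu> \<sigma> (\<phi>s n) =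
       feval \<mu> (mixv c \<rho> \<sigma>) (\<phi>s n) + feval \<mu> (mixv c \<sigma> \<rho>) (\<phi>s n)"
      using inv_feval[OF M, of "\<phi>s n"] unfolding mix_inv_def by blast
    then have "feval \<mu> (\<lambda>_. x) (\<phi>s n) + feval \<mu> (\<lambda>_. y) (\<phi>s n) =
       feval \<mu> (mixv c (\<lambda>_. x) (\<lambda>_. y)) (\<phi>s n) + feval \<mu> (mixv c (\<lambda>_. y) (\<lambda>_. x)) (\<phi>s n)"
      by blast
    then show ?thesis unfolding f_def by (simp only: mv)
  qed
  have "(\<lambda>n. f n x + f n y) \<longlonglongrightarrow> P x + P y" by (intro tendsto_add T)
  moreover have "(\<lambda>n. f n x + f n y) \<longlonglongrightarrow> P (mixe c x y) + P (mixe c y x)"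
    unfolding eqn by (intro tendsto_add T)
  ultimately show ?thesis by (rule LIMSEQ_unique)
qed

lemma mixe_join: "mixe x x y = sup x y"
  unfolding mixe_def by (simp add: sup_inf_distrib1)
lemma mixe_meet: "mixe x y x = inf y x"
  unfolding mixe_def by simp
lemma mixe_conv: "a \<le> x \<Longrightarrow> x \<le> b \<Longrightarrow> mixe x b a = x"
proof -
  assume ax: "a \<le> x" and xb: "x \<le> b"
  have "inf a (-x) = bot" using inf_mono[OF ax order_refl, of "-x"] by (simp add: le_bot)
  moreover have "inf b x = x" using xb by (simp add: inf_absorb2)
  ultimately show ?thesis unfolding mixe_def by simp
qed

context
  fixes \<mu> :: "'a::boolean_algebra \<Rightarrow> real" and D :: "'a set"
  assumes M: "prA_model \<mu>" and Dne: "D \<noteq> {}" and Dc: "closed_set \<mu> D"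
begin

lemma bdd_dist: "bdd_below ((\<lambda>a. pra_dist \<mu> x a) ` D)"
  by (rule bdd_belowI[where m=0]) (auto simp: dist_nonneg[OF M])

lemma dts_nonneg: "0 \<le> dist_to_set \<mu> D x"
  unfolding dist_to_set_def by (rule cINF_greatest[OF Dne]) (simp add: dist_nonneg[OF M])

lemma dts_zero_iff: "dist_to_set \<mu> D x = 0 \<longleftrightarrow> x \<in> D"
proof
  assume z: "dist_to_set \<mu> D x = 0"
  have "\<forall>e>0. \<exists>a\<in>D. pra_dist \<mu> x a < e"
  proof (intro allI impI)
    fix e :: real assume "0 < e"
    then have "(INF a\<in>D. pra_dist \<mu> x a) < e" using z unfolding dist_to_set_def by simp
    then show "\<exists>a\<in>D. pra_dist \<mu> x a < e" using cINF_less_iff[OF Dne bdd_dist] by blast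
  qed
  then show "x \<in> D" using Dc unfolding closed_set_def by blast
next
  assume "x \<in> D"
  then have "dist_to_set \<mu> D x \<le> pra_dist \<mu> x x"
    unfolding dist_to_set_def by (rule cINF_lower[OF bdd_dist])
  also have "\<dots> = 0" by (simp add: pra_dist_def sdiff_self mu_bot[OF M])
  finally show "dist_to_set \<mu> D x = 0" using dts_nonneg[of x] by linarith
qed

end

lemma min_exists:
  fixes \<mu> :: "'a::boolean_algebra \<Rightarrow> real" and D :: "'a set"
  assumes M: "prA_model \<mu>" and Dne: "D \<noteq> {}" and Dc: "closed_set \<mu> D"
    and Dinf: "\<And>x y. x \<in> D \<Longrightarrow> y \<in> D \<Longrightarrow> inf x y \<in> D"
  shows "\<exists>a\<in>D. \<forall>z\<in>D. a \<le> z"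
proof -
  define m where "m = Inf (\<mu> ` D)"
  have bdd: "bdd_below (\<mu> ` D)" by (rule bdd_belowI[where m=0]) (auto simp: mu_nonneg[OF M])
  have mlow: "m \<le> \<mu> z" if "z \<in> D" for z unfolding m_def using bdd that by (simp add: cInf_lower)
  have "\<exists>x\<in>D. \<mu> x < m + 1 / real (Suc n)" for n
  proof -
    have "m < m + 1 / real (Suc n)" by simp
    then show ?thesis using cInf_less_iff[of "\<mu> ` D" "m + 1 / real (Suc n)"] bdd Dne unfolding m_def by auto
  qed
  then obtain x where xD: "\<And>n. x n \<in> D" and xm: "\<And>n. \<mu> (x n) < m + 1 / real (Suc n)" by metis
  define y where "y = rec_nat (x 0) (\<lambda>n yn. inf yn (x (Suc n)))"
  have y0: "y 0 = x 0" and yS: "\<And>n. y (Suc n) = inf (y n) (x (Suc n))" unfolding y_def by simp_all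
  have yD: "y n \<in> D" for n by (induction n) (simp_all add: y0 yS xD Dinf)
  have yx: "y n \<le> x n" for n by (cases n) (simp_all add: y0 yS)
  have ydec: "y k \<le> y n" if "n \<le> k" for n k
    using that
  proof (induction k)
    case 0 then show ?case by simp
  next
    case (Suc k)
    show ?case
    proof (cases "n = Suc k")
      case True then show ?thesis by simp
    next
      case False
      then have "n \<le> k" using Suc.prems by simp
      then have "y k \<le> y n" by (rule Suc.IH)
      then show ?thesis by (simp add: yS le_infI1)
    qed
  qed
  have ym: "\<mu> (y n) < m + 1 / real (Suc n)" for n
    using mu_mono[OF M yx[of n]] xm[of n] by linarith
  have ylow: "m \<le> \<mu> (y n)" for n using mlow[OF yD] .
  have dy: "pra_dist \<mu> (y n) (y k) < 1 / real (Suc N)" if "N \<le> n" "n \<le> k" for N n k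
  proof -
    have "pra_dist \<mu> (y n) (y k) = \<mu> (y n) - \<mu> (y k)" by (rule dist_le[OF M ydec[OF that(2)]])
    also have "\<dots> < 1 / real (Suc n)" using ym[of n] ylow[of k] by linarith
    also have "\<dots> \<le> 1 / real (Suc N)" using that(1) by (simp add: frac_le)
    finally show ?thesis .
  qed
  have cauchy: "\<forall>e>0. \<exists>N. \<forall>n\<ge>N. \<forall>k\<ge>N. pra_dist \<mu> (y n) (y k) < e"
  proof (intro allI impI)
    fix e :: real assume "0 < e"
    then obtain N where N: "1 / real (Suc N) < e" using nat_approx_posE by blast
    show "\<exists>N. \<forall>n\<ge>N. \<forall>k\<ge>N. pra_dist \<mu> (y n) (y k) < e"
    proof (intro exI[of _ N] allI impI)
      fix n k assume "N \<le> n" "N \<le> k"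
      show "pra_dist \<mu> (y n) (y k) < e"
      proof (cases "n \<le> k")
        case True then show ?thesis using dy[OF \<open>N \<le> n\<close> True] N by linarith
      next
        case False
        then have "pra_dist \<mu> (y k) (y n) < 1 / real (Suc N)" using dy[OF \<open>N \<le> k\<close>] by simp
        then show ?thesis using N dist_sym[OF M, of "y n" "y k"] by linarith
      qed
    qed
  qed
  obtain a where lim: "(\<lambda>n. pra_dist \<mu> (y n) a) \<longlonglongrightarrow> 0"
    using M cauchy unfolding prA_model_def by blast
  have ev: "\<exists>n\<ge>N. pra_dist \<mu> (y n) a < e" if "0 < e" for e N
  proof -
    have "eventually (\<lambda>n. pra_dist \<mu> (y n) a < e) sequentially"
      using order_tendstoD(2)[OF lim that] .
    then obtain N0 where "\<And>n. n \<ge> N0 \<Longrightarrow> pra_dist \<mu> (y n) a < e"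
      unfolding eventually_sequentially by blast
    then show ?thesis by (intro exI[of _ "max N N0"]) simp
  qed
  have aD: "a \<in> D"
  proof -
    have "\<forall>e>0. \<exists>z\<in>D. pra_dist \<mu> a z < e"
    proof (intro allI impI)
      fix e :: real assume "0 < e"
      then obtain n where "pra_dist \<mu> (y n) a < e" using ev by blast
      then show "\<exists>z\<in>D. pra_dist \<mu> a z < e" using yD[of n] dist_sym[OF M, of a "y n"] by (intro bexI[of _ "y n"]) simp_all
    qed
    then show ?thesis using Dc unfolding closed_set_def by blast
  qed
  have am: "\<mu> a \<le> m"
  proof (rule field_le_epsilon)
    fix e :: real assume e: "0 < e"
    then obtain N where N: "1 / real (Suc N) < e / 2" using nat_approx_posE[of "e/2"] by auto
    from e obtain n where n: "n \<ge> N" "pra_dist \<mu> (y n) a < e / 2" using ev[of "e/2" N] by auto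
    have "\<mu> a \<le> \<mu> (y n) + pra_dist \<mu> a (y n)" by (rule mu_le_dist[OF M])
    also have "\<dots> < m + 1 / real (Suc n) + e / 2" using ym[of n] n(2) dist_sym[OF M, of a "y n"] by linarith
    also have "1 / real (Suc n) \<le> 1 / real (Suc N)" using n(1) by (simp add: frac_le)
    finally show "\<mu> a \<le> m + e" using N by linarith
  qed
  have "a \<le> z" if zD: "z \<in> D" for z
  proof -
    have "inf a z \<in> D" using Dinf[OF aD zD] .
    then have "m \<le> \<mu> (inf a z)" by (rule mlow)
    have "pra_dist \<mu> a (inf a z) = \<mu> a - \<mu> (inf a z)" by (rule dist_le[OF M]) simp
    also have "\<dots> \<le> 0" using am \<open>m \<le> \<mu> (inf a z)\<close> by linarith
    finally have "pra_dist \<mu> a (inf a z) = 0" using dist_nonneg[OF M, of a "inf a z"] by linarith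
    then have "a = inf a z" by (rule mu_sep[OF M])
    then show ?thesis by (metis inf.absorb_iff1)
  qed
  then show ?thesis using aD by blast
qed



lemma max_exists:
  fixes \<mu> :: "'a::boolean_algebra \<Rightarrow> real" and D :: "'a set"
  assumes M: "prA_model \<mu>" and Dne: "D \<noteq> {}" and Dc: "closed_set \<mu> D"
    and Dsup: "\<And>x y. x \<in> D \<Longrightarrow> y \<in> D \<Longrightarrow> sup x y \<in> D"
  shows "\<exists>b\<in>D. \<forall>z\<in>D. z \<le> b"
proof -
  have ne: "uminus ` D \<noteq> {}" using Dne by simp
  have cl: "closed_set \<mu> (uminus ` D)" unfolding closed_set_def
  proof (intro allI impI)
    fix x assume H: "\<forall>e>0. \<exists>a\<in>uminus ` D. pra_dist \<mu> x a < e"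
    have "\<forall>e>0. \<exists>a\<in>D. pra_dist \<mu> (-x) a < e"
    proof (intro allI impI)
      fix e :: real assume "0 < e"
      then obtain b where b: "b \<in> D" "pra_dist \<mu> x (-b) < e" using H by blast
      have "pra_dist \<mu> (-x) b = pra_dist \<mu> x (-b)"
        unfolding pra_dist_def using sdiff_compl[of "-x" b] by simp
      then show "\<exists>a\<in>D. pra_dist \<mu> (-x) a < e" using b by (intro bexI[of _ b]) simp_all
    qed
    then have "-x \<in> D" using Dc unfolding closed_set_def by blast
    then show "x \<in> uminus ` D" by (intro image_eqI[of _ _ "-x"]) simp_all
  qed
  have inf_cl: "inf x y \<in> uminus ` D" if xD: "x \<in> uminus ` D" and yD: "y \<in> uminus ` D" for x y
  proof -
    obtain u v where "u \<in> D" "v \<in> D" "x = -u" "y = -v" using xD yD by blast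
    then show ?thesis by (intro image_eqI[of _ _ "sup u v"]) (simp_all add: Dsup)
  qed
  obtain a where "a \<in> uminus ` D" "\<forall>z\<in>uminus ` D. a \<le> z"
    using min_exists[OF M ne cl inf_cl] by blast
  then obtain b where "b \<in> D" "\<forall>z\<in>D. -b \<le> -z" by auto
  then show ?thesis by auto
qed

lemma dist_interval:
  fixes \<mu> :: "'a::boolean_algebra \<Rightarrow> real"
  assumes M: "prA_model \<mu>" and ab: "a \<le> b"
  shows "dist_to_set \<mu> {y. a \<le> y \<and> y \<le> b} x = \<mu> (inf a (-x)) + \<mu> (inf x (-b))"
proof -
  define S where "S = {y. a \<le> y \<and> y \<le> b}"
  define T where "T = sup (inf x (-b)) (inf (-x) a)"
  have disj: "inf (inf x (-b)) (inf (-x) a) = bot"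
    using inf_mono[OF inf_le1 inf_le1, of x "-b" "-x" a] by (simp add: le_bot)
  have muT: "\<mu> T = \<mu> (inf a (-x)) + \<mu> (inf x (-b))"
    unfolding T_def using mu_disj[OF M disj] by (simp add: inf_commute)
  have lowb: "\<mu> T \<le> pra_dist \<mu> x y" if "y \<in> S" for y
  proof -
    from that have ay: "a \<le> y" and yb: "y \<le> b" by (auto simp: S_def)
    have "inf x (-b) \<le> inf x (-y)" using yb by (intro inf_mono) simp_all
    moreover have "inf (-x) a \<le> inf (-x) y" using ay by (intro inf_mono) simp_all
    ultimately have "T \<le> sdiff x y" unfolding T_def sdiff_def by (rule sup_mono)
    then show ?thesis unfolding pra_dist_def by (rule mu_mono[OF M])
  qed
  define y0 where "y0 = inf (sup x a) b"
  have y0S: "y0 \<in> S" unfolding S_def y0_def using ab by auto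
  have e1: "inf x (-y0) = inf x (-b)"
    unfolding y0_def by (simp add: inf_sup_distrib1)
  have e2: "inf (-x) y0 = inf (-x) a"
  proof -
    have "inf (-x) (sup x a) = inf (-x) a" by (simp add: inf_sup_distrib1)
    then have "inf (-x) y0 = inf (inf (-x) a) b" unfolding y0_def by (simp add: inf_assoc[symmetric])
    also have "\<dots> = inf (-x) a" using ab by (simp add: inf_assoc inf_absorb1)
    finally show ?thesis .
  qed
  have "sdiff x y0 = T" unfolding sdiff_def T_def e1 e2 ..
  have bdd: "bdd_below ((\<lambda>y. pra_dist \<mu> x y) ` S)"
    by (rule bdd_belowI[where m=0]) (auto simp: dist_nonneg[OF M])
  have "(INF y\<in>S. pra_dist \<mu> x y) = \<mu> T"
  proof (rule antisym)
    show "(INF y\<in>S. pra_dist \<mu> x y) \<le> \<mu> T"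
      using cINF_lower[OF bdd y0S] \<open>sdiff x y0 = T\<close> by (simp add: pra_dist_def)
    show "\<mu> T \<le> (INF y\<in>S. pra_dist \<mu> x y)"
      using y0S lowb by (intro cINF_greatest) auto
  qed
  then show ?thesis unfolding dist_to_set_def S_def[symmetric] muT .
qed

theorem mainTheorem6:
  fixes \<mu> :: "'a::boolean_algebra \<Rightarrow> real" and D :: "'a set"
  assumes "prA_model \<mu>"
    and "D \<noteq> {}"
    and "closed_set \<mu> D"
  shows "definable_set \<mu> D \<longleftrightarrow> (\<exists>a b. a \<le> b \<and> D = {x. a \<le> x \<and> x \<le> b})"
proof
  assume "definable_set \<mu> D"
  then have Pd: "definable_pred \<mu> (dist_to_set \<mu> D)" unfolding definable_set_def .
  define P where "P = dist_to_set \<mu> D"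
  have mix: "P x + P y = P (mixe c x y) + P (mixe c y x)" for x y c
    unfolding P_def by (rule def_mix[OF assms(1) Pd])
  have nn: "0 \<le> P x" for x unfolding P_def by (rule dts_nonneg[OF assms])
  have z: "P x = 0 \<longleftrightarrow> x \<in> D" for x unfolding P_def by (rule dts_zero_iff[OF assms])
  have sl: "sup x y \<in> D \<and> inf y x \<in> D" if "x \<in> D" "y \<in> D" for x y
  proof -
    have "P x + P y = P (sup x y) + P (inf y x)" using mix[of x y x] by (simp only: mixe_join mixe_meet)
    moreover have "P x = 0" "P y = 0" using z that by blast+
    ultimately have "P (sup x y) + P (inf y x) = 0" by linarith
    then have "P (sup x y) = 0" "P (inf y x) = 0" using nn[of "sup x y"] nn[of "inf y x"] by linarith+
    then show ?thesis using z by blast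
  qed
  have cv: "x \<in> D" if "a \<in> D" "b \<in> D" "a \<le> x" "x \<le> b" for a b x
  proof -
    have "P b + P a = P (mixe x b a) + P (mixe x a b)" by (rule mix)
    then have "P b + P a = P x + P (mixe x a b)" using mixe_conv[OF that(3,4)] by simp
    moreover have "P a = 0" "P b = 0" using z that(1,2) by blast+
    ultimately have "P x + P (mixe x a b) = 0" by linarith
    then have "P x = 0" using nn[of x] nn[of "mixe x a b"] by linarith
    then show ?thesis using z by blast
  qed
  obtain a where aD: "a \<in> D" and amin: "\<forall>z\<in>D. a \<le> z"
    using min_exists[OF assms] sl by blast
  obtain b where bD: "b \<in> D" and bmax: "\<forall>z\<in>D. z \<le> b"
    using max_exists[OF assms] sl by blast
  have "D = {x. a \<le> x \<and> x \<le> b}" using amin bmax cv[OF aD bD] by blast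
  moreover have "a \<le> b" using amin bD by blast
  ultimately show "\<exists>a b. a \<le> b \<and> D = {x. a \<le> x \<and> x \<le> b}" by blast
next
  assume "\<exists>a b. a \<le> b \<and> D = {x. a \<le> x \<and> x \<le> b}"
  then obtain a b where ab: "a \<le> b" and D: "D = {x. a \<le> x \<and> x \<le> b}" by blast
  define \<phi> where "\<phi> = APlus (AMu (TMeet (TPar a) (TCompl (TVar 0)))) (AMu (TMeet (TVar 0) (TCompl (TPar b))))"
  have f: "ffv \<phi> \<subseteq> {0}" unfolding \<phi>_def by simp
  have ev: "(\<lambda>x. feval \<mu> (\<lambda>_. x) \<phi>) = dist_to_set \<mu> D"
    unfolding D by (rule ext) (simp add: \<phi>_def dist_interval[OF assms(1) ab])
  have "uniform_limit UNIV (\<lambda>n x. feval \<mu> (\<lambda>_. x) \<phi>) (dist_to_set \<mu> D) sequentially"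
    unfolding ev by (rule uniform_limit_const)
  then show "definable_set \<mu> D" unfolding definable_set_def definable_pred_def
    using f by (intro exI[of _ "\<lambda>n. \<phi>"]) simp
qed

end
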